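(* For every integer $s \geq 1$, $$\mathsf {Brac}_{3,s}\cap \{\alpha_3=\beta_2=0\}=\left\{ \big( (\alpha_1, 1-\alpha_1, 0), (\beta_1, 0, 1-\beta_1) \big) \, : \, \alpha_1,\beta_1\in[0,1],\ \lceil \alpha_1 s\rceil + \lceil \beta_1 s\rceil \leq s \right\},$$ where $\{\alpha_3=\beta_2=0\}$ denotes the set of pairs $(\alpha,\beta)\in\Delta_3^2$ with $\alpha_3=0$ and $\beta_2=0$.
   Context: $\Delta_d=\{\alpha\in\mathbb R^d:\alpha_i\ge0,\ \sum_i\alpha_i=1\}$. For $s\ge1$, $\mathsf{Brac}_{d,s}$ is the set of $(\alpha,\beta)\in\Delta_d^2$ for which there exist $A_1,\dots,A_d,B_1,\dots,B_d\in M_s(\mathbb C)$ with $\sum_i A_iA_i^*=\sum_iB_iB_i^*=I_s$, $\sum_iA_iB_i^*=0$, and $\tfrac1s\|A_i\|_F^2=\alpha_i$, $\tfrac1s\|B_i\|_F^2=\beta_i$ for all $i$, where $\|X\|_F=\operatorname{Tr}(XX^* )^{1/2}$. *)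

theory Defs
  imports Complex_Main
begin

text \<open>Vectors in R^d are functions nat => real indexed by 1..d, vanishing outside 1..d.
  Complex s x s matrices are functions nat => nat => complex, entries indexed by 0..s-1
  (entries outside this range are irrelevant).\<close>

definition simplex :: "nat \<Rightarrow> (nat \<Rightarrow> real) set" where
  "simplex d = {a. (\<forall>i\<in>{1..d}. a i \<ge> 0) \<and> (\<forall>i. i \<notin> {1..d} \<longrightarrow> a i = 0)
                   \<and> (\<Sum>i=1..d. a i) = 1}"

definition mul_adj :: "nat \<Rightarrow> (nat \<Rightarrow> nat \<Rightarrow> complex) \<Rightarrow> (nat \<Rightarrow> nat \<Rightarrow> complex) \<Rightarrow> nat \<Rightarrow> nat \<Rightarrow> complex" where
  "mul_adj s X Y j l = (\<Sum>k<s. X j k * cnj (Y l k))"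

definition frob_sq :: "nat \<Rightarrow> (nat \<Rightarrow> nat \<Rightarrow> complex) \<Rightarrow> real" where
  "frob_sq s X = (\<Sum>j<s. \<Sum>k<s. (cmod (X j k))\<^sup>2)"

definition Brac :: "nat \<Rightarrow> nat \<Rightarrow> ((nat \<Rightarrow> real) \<times> (nat \<Rightarrow> real)) set" where
  "Brac d s = {(\<alpha>, \<beta>). \<alpha> \<in> simplex d \<and> \<beta> \<in> simplex d \<and>
     (\<exists>A B :: nat \<Rightarrow> nat \<Rightarrow> nat \<Rightarrow> complex.
        (\<forall>j<s. \<forall>l<s. (\<Sum>i=1..d. mul_adj s (A i) (A i) j l) = (if j = l then 1 else 0)) \<and>
        (\<forall>j<s. \<forall>l<s. (\<Sum>i=1..d. mul_adj s (B i) (B i) j l) = (if j = l then 1 else 0)) \<and>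
        (\<forall>j<s. \<forall>l<s. (\<Sum>i=1..d. mul_adj s (A i) (B i) j l) = 0) \<and>
        (\<forall>i\<in>{1..d}. frob_sq s (A i) / real s = \<alpha> i \<and> frob_sq s (B i) / real s = \<beta> i))}"

definition vec3 :: "real \<Rightarrow> real \<Rightarrow> real \<Rightarrow> nat \<Rightarrow> real" where
  "vec3 a b c = (\<lambda>i. if i = 1 then a else if i = 2 then b else if i = 3 then c else 0)"

end

theory Submission
  imports Defs
begin


definition ip :: "nat \<Rightarrow> (nat \<Rightarrow> complex) \<Rightarrow> (nat \<Rightarrow> complex) \<Rightarrow> complex" where
  "ip s x y = (\<Sum>k<s. x k * cnj (y k))"

definition orthonormal :: "nat \<Rightarrow> (nat \<Rightarrow> complex) set \<Rightarrow> bool" where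
  "orthonormal s E = (\<forall>e\<in>E. \<forall>e'\<in>E. ip s e e' = (if e = e' then 1 else 0))"

lemma ip_cnj: "ip s y x = cnj (ip s x y)"
  unfolding ip_def by (simp add: mult.commute)

lemma ip_self: "ip s x x = of_real (\<Sum>k<s. (cmod (x k))\<^sup>2)"
  unfolding ip_def of_real_sum by (intro sum.cong) (auto simp: complex_norm_square[symmetric])

lemma ip_self_mod: "ip s x x * cnj (ip s x x) = (ip s x x)\<^sup>2"
  by (simp add: ip_self power2_eq_square)

lemma ip_lin:
  assumes "finite E" "\<forall>k<s. x k = (\<Sum>e\<in>E. c e * e k)"
  shows "ip s x v = (\<Sum>e\<in>E. c e * ip s e v)"
proof -
  have "ip s x v = (\<Sum>k<s. (\<Sum>e\<in>E. c e * e k) * cnj (v k))"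
    unfolding ip_def using assms(2) by (intro sum.cong) auto
  also have "\<dots> = (\<Sum>k<s. \<Sum>e\<in>E. c e * (e k * cnj (v k)))"
    by (simp add: sum_distrib_right mult.assoc)
  also have "\<dots> = (\<Sum>e\<in>E. c e * ip s e v)"
    unfolding ip_def by (subst sum.swap) (simp add: sum_distrib_left)
  finally show ?thesis .
qed

lemma ip_lin_right:
  assumes "finite E" "\<forall>k<s. x k = (\<Sum>e\<in>E. c e * e k)"
  shows "ip s v x = (\<Sum>e\<in>E. cnj (c e) * ip s v e)"
proof -
  have "ip s v x = cnj (ip s x v)" by (rule ip_cnj)
  also have "\<dots> = (\<Sum>e\<in>E. cnj (c e) * ip s v e)"
    using ip_lin[OF assms, of v] by (simp add: ip_cnj[of s v])
  finally show ?thesis .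
qed

lemma ip_diff_left: "ip s (\<lambda>k. x k - y k) v = ip s x v - ip s y v"
  unfolding ip_def by (simp add: algebra_simps sum_subtractf)

lemma ip_sum_left: "finite E \<Longrightarrow> ip s (\<lambda>k. \<Sum>e\<in>E. c e * e k) v = (\<Sum>e\<in>E. c e * ip s e v)"
  by (rule ip_lin) auto

lemma ip_self_ge: "0 \<le> Re (ip s x x)"
  by (simp add: ip_self sum_nonneg)

lemma ip_self_real: "ip s x x = of_real (Re (ip s x x))"
  by (simp add: ip_self)

lemma sum_orth_delta:
  assumes "finite E" "orthonormal s E" "e \<in> E"
  shows "(\<Sum>e'\<in>E. d e' * ip s e' e) = d e"
proof -
  have "(\<Sum>e'\<in>E. d e' * ip s e' e) = (\<Sum>e'\<in>E. if e' = e then d e' else 0)"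
    using assms(2,3) unfolding orthonormal_def by (intro sum.cong) auto
  also have "\<dots> = d e" using assms(1,3) by simp
  finally show ?thesis .
qed

lemma bessel:
  assumes fin: "finite E" and on: "orthonormal s E"
  shows "(\<Sum>e\<in>E. (cmod (ip s x e))\<^sup>2) \<le> Re (ip s x x)"
proof -
  define c where "c e = ip s x e" for e
  define S where "S = (\<lambda>k. \<Sum>e\<in>E. c e * e k)"
  define y where "y = (\<lambda>k. x k - S k)"
  have ipS: "ip s S v = (\<Sum>e\<in>E. c e * ip s e v)" for v
    unfolding S_def by (rule ip_sum_left[OF fin])
  have ipy: "ip s y v = ip s x v - ip s S v" for v
    unfolding y_def by (rule ip_diff_left)
  have ey: "ip s e y = 0" if "e \<in> E" for e
  proof -
    have "ip s y e = ip s x e - (\<Sum>e'\<in>E. c e' * ip s e' e)" by (simp add: ipy ipS)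
    also have "\<dots> = 0" using sum_orth_delta[OF fin on that, of c] by (simp add: c_def)
    finally show ?thesis by (simp add: ip_cnj[of s e y])
  qed
  have Sy: "ip s S y = 0" using ipS ey by simp
  have "ip s y y = ip s x y" using ipy Sy by simp
  also have "ip s x y = cnj (ip s y x)" by (rule ip_cnj)
  also have "ip s y x = ip s x x - (\<Sum>e\<in>E. c e * cnj (c e))"
  proof -
    have "ip s y x = ip s x x - (\<Sum>e\<in>E. c e * ip s e x)" by (simp add: ipy ipS)
    also have "(\<Sum>e\<in>E. c e * ip s e x) = (\<Sum>e\<in>E. c e * cnj (c e))"
      by (intro sum.cong refl) (metis c_def ip_cnj)
    finally show ?thesis .
  qed
  finally have "ip s y y = cnj (ip s x x) - (\<Sum>e\<in>E. cnj (c e) * c e)"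
    by (simp add: mult.commute)
  also have "cnj (ip s x x) = ip s x x" by (simp add: ip_self)
  also have "(\<Sum>e\<in>E. cnj (c e) * c e) = of_real (\<Sum>e\<in>E. (cmod (c e))\<^sup>2)"
    unfolding of_real_sum by (intro sum.cong refl) (simp add: complex_norm_square[symmetric] mult.commute)
  finally have "Re (ip s y y) = Re (ip s x x) - (\<Sum>e\<in>E. (cmod (c e))\<^sup>2)"
    by simp
  with ip_self_ge[of s y] show ?thesis by (simp add: c_def)
qed

lemma card_orth:
  assumes fin: "finite G" and on: "orthonormal s G"
  shows "card G \<le> s"
proof -
  define u where "u k = (\<lambda>i::nat. if i = k then (1::complex) else 0)" for k :: nat
  have uip: "ip s (u k) g = cnj (g k)" if "k < s" for k g
  proof -
    have "ip s (u k) g = (\<Sum>i<s. if i = k then cnj (g i) else 0)"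
      unfolding ip_def u_def by (intro sum.cong) auto
    then show ?thesis using that by simp
  qed
  have "real (card G) = (\<Sum>g\<in>G. Re (ip s g g))"
    using on unfolding orthonormal_def by simp
  also have "\<dots> = (\<Sum>g\<in>G. \<Sum>k<s. (cmod (g k))\<^sup>2)" by (simp add: ip_self)
  also have "\<dots> = (\<Sum>k<s. \<Sum>g\<in>G. (cmod (ip s (u k) g))\<^sup>2)"
    by (subst sum.swap) (intro sum.cong refl, simp add: uip)
  also have "\<dots> \<le> (\<Sum>k<s. Re (ip s (u k) (u k)))"
    by (intro sum_mono bessel fin on)
  also have "\<dots> = (\<Sum>k<s. 1)"
    by (intro sum.cong refl) (simp add: uip, simp add: u_def)
  finally show ?thesis by simp
qed


lemma ip_scale_left: "ip s (\<lambda>k. y k / a) v = ip s y v / a"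
  unfolding ip_def by (simp add: sum_divide_distrib)

lemma ip_scale_right_real: "ip s v (\<lambda>k. y k / complex_of_real a) = ip s v y / complex_of_real a"
  unfolding ip_def by (simp add: sum_divide_distrib)

lemma gram_schmidt:
  assumes "finite X"
  shows "\<exists>E. finite E \<and> orthonormal s E \<and> (\<forall>x\<in>X. \<forall>k<s. x k = (\<Sum>e\<in>E. ip s x e * e k))
     \<and> (\<forall>e\<in>E. \<forall>v. (\<forall>x\<in>X. ip s x v = 0) \<longrightarrow> ip s e v = 0)"
  using assms
proof (induction X rule: finite_induct)
  case empty
  show ?case by (rule exI[of _ "{}"]) (simp add: orthonormal_def)
next
  case (insert x X)
  then obtain E where fin: "finite E" and on: "orthonormal s E"
    and sp: "\<forall>x\<in>X. \<forall>k<s. x k = (\<Sum>e\<in>E. ip s x e * e k)"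
    and oc: "\<forall>e\<in>E. \<forall>v. (\<forall>x\<in>X. ip s x v = 0) \<longrightarrow> ip s e v = 0" by blast
  define S where "S = (\<lambda>k. \<Sum>e\<in>E. ip s x e * e k)"
  define y where "y = (\<lambda>k. x k - S k)"
  have ipS: "ip s S v = (\<Sum>e\<in>E. ip s x e * ip s e v)" for v
    unfolding S_def by (rule ip_sum_left[OF fin])
  have ipy: "ip s y v = ip s x v - ip s S v" for v
    unfolding y_def by (rule ip_diff_left)
  have ye: "ip s y e = 0" if "e \<in> E" for e
    using sum_orth_delta[OF fin on that, of "ip s x"] by (simp add: ipy ipS)
  have ey: "ip s e y = 0" if "e \<in> E" for e
    using ye[OF that] by (simp add: ip_cnj[of s e y])
  show ?case
  proof (cases "Re (ip s y y) = 0")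
    case True
    have "(\<Sum>k<s. (cmod (y k))\<^sup>2) = 0" using True by (simp add: ip_self)
    then have y0: "\<forall>k<s. y k = 0"
      by (subst (asm) sum_nonneg_eq_0_iff) auto
    show ?thesis
    proof (intro exI[of _ E] conjI fin on ballI allI impI)
      fix x' k assume "x' \<in> insert x X" "k < s"
      from \<open>x' \<in> insert x X\<close> show "x' k = (\<Sum>e\<in>E. ip s x' e * e k)"
      proof
        assume "x' = x" then show ?thesis using y0 \<open>k < s\<close> unfolding y_def S_def by auto
      next
        assume "x' \<in> X" then show ?thesis using sp \<open>k < s\<close> by auto
      qed
    next
      fix e v assume "e \<in> E" "\<forall>x\<in>insert x X. ip s x v = 0"
      then show "ip s e v = 0" using oc by auto
    qed
  next
    case False
    define n where "n = sqrt (Re (ip s y y))"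
    have npos: "n > 0" using False ip_self_ge[of s y] by (simp add: n_def)
    have nn: "n * n = Re (ip s y y)" using ip_self_ge[of s y] unfolding n_def by simp
    have nsq: "ip s y y = complex_of_real n * complex_of_real n"
      by (subst ip_self_real) (simp only: nn flip: of_real_mult)
    define e0 where "e0 = (\<lambda>k. y k / complex_of_real n)"
    have e0l: "ip s e0 v = ip s y v / complex_of_real n" for v
      unfolding e0_def by (rule ip_scale_left)
    have e0r: "ip s v e0 = ip s v y / complex_of_real n" for v
      unfolding e0_def by (rule ip_scale_right_real)
    have e0e0: "ip s e0 e0 = 1" using npos by (simp add: e0l e0r nsq)
    have e0E: "ip s e0 e = 0" "ip s e e0 = 0" if "e \<in> E" for e
      using ye[OF that] ey[OF that] by (simp_all add: e0l e0r)
    have e0n: "e0 \<notin> E" using e0E(1) e0e0 by force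
    have on': "orthonormal s (insert e0 E)"
      using on e0e0 e0E e0n unfolding orthonormal_def by auto
    show ?thesis
    proof (intro exI[of _ "insert e0 E"] conjI on' ballI allI impI)
      show "finite (insert e0 E)" using fin by simp
    next
      fix x' k assume "x' \<in> insert x X" "k < s"
      have sum_ins: "(\<Sum>e\<in>insert e0 E. ip s x' e * e k) = ip s x' e0 * e0 k + (\<Sum>e\<in>E. ip s x' e * e k)"
        using fin e0n by simp
      from \<open>x' \<in> insert x X\<close> show "x' k = (\<Sum>e\<in>insert e0 E. ip s x' e * e k)"
      proof
        assume xx: "x' = x"
        have "ip s x e0 = ip s y e0 + ip s S e0" using ipy[of e0] by simp
        also have "ip s S e0 = 0" using ipS[of e0] e0E(2) by simp
        also have "ip s y e0 = complex_of_real n" using npos by (simp add: e0r nsq)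
        finally have "ip s x e0 * e0 k = y k" using npos by (simp add: e0_def)
        then show ?thesis using sum_ins xx unfolding y_def S_def by simp
      next
        assume x'X: "x' \<in> X"
        have "ip s x' e0 = (\<Sum>e\<in>E. ip s x' e * ip s e e0)"
          using sp x'X by (intro ip_lin[OF fin]) auto
        also have "\<dots> = 0" using e0E(2) by simp
        finally show ?thesis using sum_ins sp x'X \<open>k < s\<close> by simp
      qed
    next
      fix e v assume e: "e \<in> insert e0 E" and v: "\<forall>x\<in>insert x X. ip s x v = 0"
      have vE: "ip s e' v = 0" if "e' \<in> E" for e'
        using oc v that by auto
      show "ip s e v = 0"
      proof (cases "e = e0")
        case True
        have "ip s y v = 0" using v vE by (simp add: ipy ipS)
        then show ?thesis using True by (simp add: e0l)
      next
        case False then show ?thesis using e vE by auto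
      qed
    qed
  qed
qed



lemma qf_eq:
  "(\<Sum>j<s. \<Sum>l<s. cnj (c j) * c l * mul_adj s X X j l)
     = ip s (\<lambda>k. \<Sum>j<s. cnj (c j) * X j k) (\<lambda>k. \<Sum>j<s. cnj (c j) * X j k)"
proof -
  have "(\<Sum>j<s. \<Sum>l<s. cnj (c j) * c l * mul_adj s X X j l)
      = (\<Sum>j<s. \<Sum>l<s. \<Sum>k<s. (cnj (c j) * X j k) * (c l * cnj (X l k)))"
    unfolding mul_adj_def by (simp add: sum_distrib_left mult_ac)
  also have "\<dots> = (\<Sum>j<s. \<Sum>k<s. \<Sum>l<s. (cnj (c j) * X j k) * (c l * cnj (X l k)))"
    by (rule sum.cong[OF refl]) (rule sum.swap)
  also have "\<dots> = (\<Sum>k<s. \<Sum>j<s. \<Sum>l<s. (cnj (c j) * X j k) * (c l * cnj (X l k)))"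
    by (rule sum.swap)
  also have "\<dots> = ip s (\<lambda>k. \<Sum>j<s. cnj (c j) * X j k) (\<lambda>k. \<Sum>j<s. cnj (c j) * X j k)"
    unfolding ip_def by (simp add: sum_product cnj_sum)
  finally show ?thesis .
qed

lemma row_bound:
  fixes d :: nat and A :: "nat \<Rightarrow> nat \<Rightarrow> nat \<Rightarrow> complex"
  assumes I: "\<forall>j<s. \<forall>l<s. (\<Sum>i=1..d. mul_adj s (A i) (A i) j l) = (if j = l then 1 else 0)"
    and i0: "i0 \<in> {1..d}" and ee: "ip s e e = 1"
  shows "(\<Sum>j<s. (cmod (ip s (A i0 j) e))\<^sup>2) \<le> 1"
proof -
  define c where "c j = ip s (A i0 j) e" for j
  define w where "w i = (\<lambda>k. \<Sum>j<s. cnj (c j) * A i j k)" for i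
  define t where "t = (\<Sum>j<s. (cmod (c j))\<^sup>2)"
  have t0: "t \<ge> 0" unfolding t_def by (simp add: sum_nonneg)
  have "(\<Sum>i=1..d. ip s (w i) (w i)) = (\<Sum>i=1..d. \<Sum>j<s. \<Sum>l<s. cnj (c j) * c l * mul_adj s (A i) (A i) j l)"
    unfolding w_def by (simp add: qf_eq)
  also have "\<dots> = (\<Sum>j<s. \<Sum>l<s. cnj (c j) * c l * (\<Sum>i=1..d. mul_adj s (A i) (A i) j l))"
  proof -
    have "(\<Sum>i=1..d. \<Sum>j<s. \<Sum>l<s. cnj (c j) * c l * mul_adj s (A i) (A i) j l)
      = (\<Sum>j<s. \<Sum>l<s. \<Sum>i=1..d. cnj (c j) * c l * mul_adj s (A i) (A i) j l)"
      by (subst sum.swap, rule sum.cong[OF refl], rule sum.swap)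
    then show ?thesis by (simp add: sum_distrib_left)
  qed
  also have "\<dots> = (\<Sum>j<s. \<Sum>l<s. if j = l then cnj (c j) * c l else 0)"
    using I by (intro sum.cong refl) auto
  also have "\<dots> = (\<Sum>j<s. cnj (c j) * c j)" by simp
  also have "\<dots> = of_real t"
    unfolding t_def of_real_sum by (intro sum.cong refl) (simp add: complex_norm_square[symmetric] mult.commute)
  finally have sumw: "(\<Sum>i=1..d. Re (ip s (w i) (w i))) = t"
    by (metis Re_complex_of_real Re_sum)
  have "Re (ip s (w i0) (w i0)) \<le> (\<Sum>i=1..d. Re (ip s (w i) (w i)))"
    using i0 by (intro member_le_sum) (auto simp: ip_self_ge)
  then have wle: "Re (ip s (w i0) (w i0)) \<le> t" using sumw by simp
  have "ip s (w i0) e = (\<Sum>j<s. cnj (c j) * c j)"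
    unfolding w_def c_def ip_def
    by (simp add: sum_distrib_right sum_distrib_left mult_ac) (rule sum.swap)
  also have "\<dots> = of_real t"
    unfolding t_def of_real_sum by (intro sum.cong refl) (simp add: complex_norm_square[symmetric] mult.commute)
  finally have we: "ip s (w i0) e = of_real t" .
  have on1: "orthonormal s {e}" using ee unfolding orthonormal_def by simp
  have "(cmod (ip s (w i0) e))\<^sup>2 \<le> Re (ip s (w i0) (w i0))"
    using bessel[OF _ on1, of "w i0"] by simp
  then have "t\<^sup>2 \<le> t" using we wle t0 by simp
  then have tt: "t * t \<le> t" by (simp add: power2_eq_square)
  have "t \<le> 1"
  proof (rule ccontr)
    assume "\<not> t \<le> 1"
    then have "t * 1 < t * t" by (intro mult_strict_left_mono) auto
    then show False using tt by simp
  qed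
  then show ?thesis by (simp add: t_def c_def)
qed
lemma parseval:
  assumes fin: "finite E" and sp: "\<forall>k<s. x k = (\<Sum>e\<in>E. ip s x e * e k)"
  shows "Re (ip s x x) = (\<Sum>e\<in>E. (cmod (ip s x e))\<^sup>2)"
proof -
  have "ip s x x = (\<Sum>e\<in>E. ip s x e * ip s e x)" by (rule ip_lin[OF fin sp])
  also have "\<dots> = (\<Sum>e\<in>E. of_real ((cmod (ip s x e))\<^sup>2))"
    by (intro sum.cong refl) (metis complex_norm_square ip_cnj)
  finally show ?thesis by (simp add: of_real_sum[symmetric] del: of_real_sum)
qed

lemma frob_ip: "frob_sq s X = (\<Sum>j<s. Re (ip s (X j) (X j)))"
  unfolding frob_sq_def by (simp add: ip_self)

lemma frob_bound:
  fixes d :: nat and A :: "nat \<Rightarrow> nat \<Rightarrow> nat \<Rightarrow> complex"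
  assumes I: "\<forall>j<s. \<forall>l<s. (\<Sum>i=1..d. mul_adj s (A i) (A i) j l) = (if j = l then 1 else 0)"
    and i0: "i0 \<in> {1..d}" and fin: "finite E" and on: "orthonormal s E"
    and sp: "\<forall>x\<in>(\<lambda>j. A i0 j) ` {..<s}. \<forall>k<s. x k = (\<Sum>e\<in>E. ip s x e * e k)"
  shows "frob_sq s (A i0) \<le> real (card E)"
proof -
  have "frob_sq s (A i0) = (\<Sum>j<s. \<Sum>e\<in>E. (cmod (ip s (A i0 j) e))\<^sup>2)"
    unfolding frob_ip using sp by (intro sum.cong refl parseval[OF fin]) auto
  also have "\<dots> = (\<Sum>e\<in>E. \<Sum>j<s. (cmod (ip s (A i0 j) e))\<^sup>2)" by (rule sum.swap)
  also have "\<dots> \<le> (\<Sum>e\<in>E. 1)"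
    using on unfolding orthonormal_def by (intro sum_mono row_bound[OF I i0]) auto
  finally show ?thesis by simp
qed

lemma necessity_core:
  fixes d :: nat and A B :: "nat \<Rightarrow> nat \<Rightarrow> nat \<Rightarrow> complex"
  assumes IA: "\<forall>j<s. \<forall>l<s. (\<Sum>i=1..d. mul_adj s (A i) (A i) j l) = (if j = l then 1 else 0)"
    and IB: "\<forall>j<s. \<forall>l<s. (\<Sum>i=1..d. mul_adj s (B i) (B i) j l) = (if j = l then 1 else 0)"
    and i1: "i1 \<in> {1..d}" and i2: "i2 \<in> {1..d}"
    and orth: "\<forall>j<s. \<forall>l<s. mul_adj s (A i1) (B i2) j l = 0"
  shows "\<exists>p q. frob_sq s (A i1) \<le> real p \<and> frob_sq s (B i2) \<le> real q \<and> p + q \<le> s"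
proof -
  obtain EA where fA: "finite EA" and oA: "orthonormal s EA"
    and sA: "\<forall>x\<in>(\<lambda>j. A i1 j) ` {..<s}. \<forall>k<s. x k = (\<Sum>e\<in>EA. ip s x e * e k)"
    and cA: "\<forall>e\<in>EA. \<forall>v. (\<forall>x\<in>(\<lambda>j. A i1 j) ` {..<s}. ip s x v = 0) \<longrightarrow> ip s e v = 0"
    using gram_schmidt[of "(\<lambda>j. A i1 j) ` {..<s}" s] by blast
  obtain EB where fB: "finite EB" and oB: "orthonormal s EB"
    and sB: "\<forall>x\<in>(\<lambda>j. B i2 j) ` {..<s}. \<forall>k<s. x k = (\<Sum>e\<in>EB. ip s x e * e k)"
    and cB: "\<forall>e\<in>EB. \<forall>v. (\<forall>x\<in>(\<lambda>j. B i2 j) ` {..<s}. ip s x v = 0) \<longrightarrow> ip s e v = 0"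
    using gram_schmidt[of "(\<lambda>j. B i2 j) ` {..<s}" s] by blast
  have ef: "ip s e f = 0" if e: "e \<in> EA" and f: "f \<in> EB" for e f
  proof -
    have "ip s (B i2 l) (A i1 j) = 0" if "j < s" "l < s" for j l
    proof -
      have "ip s (B i2 l) (A i1 j) = cnj (mul_adj s (A i1) (B i2) j l)"
        unfolding ip_def mul_adj_def by (simp add: mult.commute)
      then show ?thesis using orth that by simp
    qed
    then have "ip s f (A i1 j) = 0" if "j < s" for j using cB f that by auto
    then have "ip s (A i1 j) f = 0" if "j < s" for j using that by (metis ip_cnj complex_cnj_zero)
    then show ?thesis using cA e by auto
  qed
  have disj: "EA \<inter> EB = {}"
  proof (rule ccontr)
    assume "EA \<inter> EB \<noteq> {}"
    then obtain e where "e \<in> EA" "e \<in> EB" by auto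
    then show False using ef[of e e] oA unfolding orthonormal_def by auto
  qed
  have fe: "ip s f e = 0" if "e \<in> EA" "f \<in> EB" for e f
    using ef[OF that] ip_cnj[of s f e] by simp
  have oAB: "orthonormal s (EA \<union> EB)"
    unfolding orthonormal_def
  proof (intro ballI)
    fix e e' assume e: "e \<in> EA \<union> EB" and e': "e' \<in> EA \<union> EB"
    show "ip s e e' = (if e = e' then 1 else 0)"
    proof (cases "e \<in> EA")
      case True
      show ?thesis
      proof (cases "e' \<in> EA")
        case True2: True
        then show ?thesis using oA True unfolding orthonormal_def by blast
      next
        case False
        then have "e' \<in> EB" "e \<noteq> e'" using e' True by auto
        then show ?thesis using ef True by simp
      qed
    next
      case False
      then have eB: "e \<in> EB" using e by auto
      show ?thesis
      proof (cases "e' \<in> EA")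
        case True
        then have "e \<noteq> e'" using False by auto
        then show ?thesis using fe True eB by simp
      next
        case False2: False
        then have "e' \<in> EB" using e' by auto
        then show ?thesis using oB eB unfolding orthonormal_def by blast
      qed
    qed
  qed
  have "card EA + card EB \<le> s"
    using card_orth[OF _ oAB] fA fB disj by (simp add: card_Un_disjoint)
  moreover have "frob_sq s (A i1) \<le> real (card EA)" by (rule frob_bound[OF IA i1 fA oA sA])
  moreover have "frob_sq s (B i2) \<le> real (card EB)" by (rule frob_bound[OF IB i2 fB oB sB])
  ultimately show ?thesis by blast
qed



lemma sum3: "(\<Sum>i=1..3. f i) = f (1::nat) + f 2 + f 3"
proof -
  have "{1..3::nat} = {1,2,3}" by auto
  then show ?thesis by (simp add: add.assoc)
qed

definition dg :: "(nat \<Rightarrow> real) \<Rightarrow> nat \<Rightarrow> nat \<Rightarrow> complex" where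
  "dg u = (\<lambda>j k. if j = k then complex_of_real (u j) else 0)"

lemma mul_adj_dg: "j < s \<Longrightarrow> l < s \<Longrightarrow>
  mul_adj s (dg u) (dg v) j l = (if j = l then complex_of_real (u j * v j) else 0)"
proof -
  assume js: "j < s" and ls: "l < s"
  have "mul_adj s (dg u) (dg v) j l = (\<Sum>k<s. if k = j then (if j = l then complex_of_real (u j * v j) else 0) else 0)"
    unfolding mul_adj_def dg_def by (intro sum.cong refl) auto
  also have "\<dots> = (if j = l then complex_of_real (u j * v j) else 0)" using js by simp
  finally show ?thesis .
qed

lemma frob_dg: "frob_sq s (dg u) = (\<Sum>j<s. (u j)\<^sup>2)"
proof -
  have "frob_sq s (dg u) = (\<Sum>j<s. \<Sum>k<s. if k = j then (u j)\<^sup>2 else 0)"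
    unfolding frob_sq_def dg_def by (intro sum.cong refl) auto
  then show ?thesis by simp
qed

lemma sum_ind: "m \<le> s \<Longrightarrow> (\<Sum>j<s. if p \<le> j \<and> j < p + q then c else 0) = real q * c"
  if "p + q \<le> s" for m s p q :: nat and c :: real
proof -
  have "(\<Sum>j<s. if p \<le> j \<and> j < p + q then c else 0) = (\<Sum>j\<in>{..<s} \<inter> {p..<p+q}. c)"
    by (subst sum.inter_restrict) (auto intro!: sum.cong)
  also have "{..<s} \<inter> {p..<p+q} = {p..<p+q}" using that by auto
  finally show ?thesis by simp
qed

lemma vec3_simplex: "0 \<le> a \<Longrightarrow> 0 \<le> b \<Longrightarrow> 0 \<le> c \<Longrightarrow> a + b + c = 1 \<Longrightarrow> vec3 a b c \<in> simplex 3"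
  unfolding simplex_def sum3 by (auto simp: vec3_def)


lemma sum_ind0: "p \<le> s \<Longrightarrow> (\<Sum>j<s. if j < p then c else 0) = real p * c"
  for p s :: nat and c :: real
  using sum_ind[of 0 p s s c] by simp

lemma construction:
  fixes s :: nat and a1 b1 :: real
  assumes s1: "s \<ge> 1" and a0: "0 \<le> a1" and a1: "a1 \<le> 1" and b0: "0 \<le> b1" and b1: "b1 \<le> 1"
    and c: "\<lceil>a1 * real s\<rceil> + \<lceil>b1 * real s\<rceil> \<le> int s"
  shows "(vec3 a1 (1 - a1) 0, vec3 b1 0 (1 - b1)) \<in> Brac 3 s"
proof -
  define p where "p = nat \<lceil>a1 * real s\<rceil>"
  define q where "q = nat \<lceil>b1 * real s\<rceil>"
  have pi: "int p = \<lceil>a1 * real s\<rceil>" unfolding p_def using mult_nonneg_nonneg[OF a0 of_nat_0_le_iff[of s]] by simp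
  have qi: "int q = \<lceil>b1 * real s\<rceil>" unfolding q_def using mult_nonneg_nonneg[OF b0 of_nat_0_le_iff[of s]] by simp
  have pq: "p + q \<le> s" using c pi qi by linarith
  have ap: "a1 * real s \<le> real p" by (metis le_of_int_ceiling of_int_of_nat_eq pi)
  have bq: "b1 * real s \<le> real q" by (metis le_of_int_ceiling of_int_of_nat_eq qi)
  define ra where "ra = (if p = 0 then 0 else a1 * real s / real p)"
  define rb where "rb = (if q = 0 then 0 else b1 * real s / real q)"
  have ra0: "0 \<le> ra" "ra \<le> 1" using a0 ap by (auto simp: ra_def divide_simps)
  have rb0: "0 \<le> rb" "rb \<le> 1" using b0 bq by (auto simp: rb_def divide_simps)
  have as0: "0 \<le> a1 * real s" using a0 by simp
  have bs0: "0 \<le> b1 * real s" using b0 by simp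
  have pra: "real p * ra = a1 * real s"
  proof (cases "p = 0")
    case True then show ?thesis using ap as0 by (simp add: ra_def)
  next
    case False then show ?thesis by (simp add: ra_def)
  qed
  have qrb: "real q * rb = b1 * real s"
  proof (cases "q = 0")
    case True then show ?thesis using bq bs0 by (simp add: rb_def)
  next
    case False then show ?thesis by (simp add: rb_def)
  qed
  define x where "x j = (if j < p then sqrt ra else 0)" for j
  define y where "y j = (if p \<le> j \<and> j < p + q then sqrt rb else 0)" for j
  define x2 where "x2 j = sqrt (1 - x j * x j)" for j
  define y3 where "y3 j = sqrt (1 - y j * y j)" for j
  have xx: "x j * x j = (if j < p then ra else 0)" for j using ra0 by (simp add: x_def)
  have yy: "y j * y j = (if p \<le> j \<and> j < p + q then rb else 0)" for j using rb0 by (simp add: y_def)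
  have x2x2: "x2 j * x2 j = 1 - x j * x j" for j unfolding x2_def using xx[of j] ra0 by simp
  have y3y3: "y3 j * y3 j = 1 - y j * y j" for j unfolding y3_def using yy[of j] rb0 by simp
  have xy: "x j * y j = 0" for j by (simp add: x_def y_def)
  define A where "A i = (if i = 1 then dg x else if i = 2 then dg x2 else dg (\<lambda>_. 0))" for i :: nat
  define B where "B i = (if i = 1 then dg y else if i = 3 then dg y3 else dg (\<lambda>_. 0))" for i :: nat
  have sx: "(\<Sum>j<s. (x j)\<^sup>2) = a1 * real s"
    using sum_ind0[of p s ra] pq pra by (simp add: power2_eq_square xx)
  have sx2: "(\<Sum>j<s. (x2 j)\<^sup>2) = real s - a1 * real s"
    using sx by (simp add: power2_eq_square x2x2 sum_subtractf)
  have sy: "(\<Sum>j<s. (y j)\<^sup>2) = b1 * real s"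
    using sum_ind[of p q s s rb] pq qrb by (simp add: power2_eq_square yy)
  have sy3: "(\<Sum>j<s. (y3 j)\<^sup>2) = real s - b1 * real s"
    using sy by (simp add: power2_eq_square y3y3 sum_subtractf)
  have sp: "real s > 0" using s1 by simp
  have c1: "\<forall>j<s. \<forall>l<s. (\<Sum>i=1..3. mul_adj s (A i) (A i) j l) = (if j = l then 1 else 0)"
    unfolding sum3 A_def by (simp add: mul_adj_dg x2x2 flip: of_real_add)
  have c2: "\<forall>j<s. \<forall>l<s. (\<Sum>i=1..3. mul_adj s (B i) (B i) j l) = (if j = l then 1 else 0)"
    unfolding sum3 B_def by (simp add: mul_adj_dg y3y3 flip: of_real_add)
  have c3: "\<forall>j<s. \<forall>l<s. (\<Sum>i=1..3. mul_adj s (A i) (B i) j l) = 0"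
    unfolding sum3 A_def B_def by (simp add: mul_adj_dg xy)
  have c4: "\<forall>i\<in>{1..3}. frob_sq s (A i) / real s = vec3 a1 (1 - a1) 0 i \<and> frob_sq s (B i) / real s = vec3 b1 0 (1 - b1) i"
  proof
    fix i :: nat assume "i \<in> {1..3}"
    then have "i = 1 \<or> i = 2 \<or> i = 3" by auto
    then show "frob_sq s (A i) / real s = vec3 a1 (1 - a1) 0 i \<and> frob_sq s (B i) / real s = vec3 b1 0 (1 - b1) i"
      using sp by (auto simp: A_def B_def frob_dg sx sx2 sy sy3 vec3_def field_simps)
  qed
  have s1': "vec3 a1 (1 - a1) 0 \<in> simplex 3" using a0 a1 by (intro vec3_simplex) auto
  have s2': "vec3 b1 0 (1 - b1) \<in> simplex 3" using b0 b1 by (intro vec3_simplex) auto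
  show ?thesis unfolding Brac_def using s1' s2' c1 c2 c3 c4 by blast
qed


theorem proposition3p10:
  fixes s :: nat
  assumes "s \<ge> 1"
  shows "Brac 3 s \<inter> {(\<alpha>, \<beta>). \<alpha> \<in> simplex 3 \<and> \<beta> \<in> simplex 3 \<and> \<alpha> 3 = 0 \<and> \<beta> 2 = 0} =
         {(vec3 a1 (1 - a1) 0, vec3 b1 0 (1 - b1)) | a1 b1.
            a1 \<in> {0..1} \<and> b1 \<in> {0..1} \<and> \<lceil>a1 * real s\<rceil> + \<lceil>b1 * real s\<rceil> \<le> int s}"
proof (intro equalityI subsetI)
  have sp: "real s > 0" using assms by simp
  fix z assume z: "z \<in> Brac 3 s \<inter> {(\<alpha>, \<beta>). \<alpha> \<in> simplex 3 \<and> \<beta> \<in> simplex 3 \<and> \<alpha> 3 = 0 \<and> \<beta> 2 = 0}"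
  obtain \<alpha> \<beta> where zab: "z = (\<alpha>, \<beta>)" by (cases z)
  from z zab have sa: "\<alpha> \<in> simplex 3" and sb: "\<beta> \<in> simplex 3" and a3: "\<alpha> 3 = 0" and b2: "\<beta> 2 = 0"
    by (auto simp: Brac_def)
  from z zab obtain A B :: "nat \<Rightarrow> nat \<Rightarrow> nat \<Rightarrow> complex" where
    IA: "\<forall>j<s. \<forall>l<s. (\<Sum>i=1..3. mul_adj s (A i) (A i) j l) = (if j = l then 1 else 0)" and
    IB: "\<forall>j<s. \<forall>l<s. (\<Sum>i=1..3. mul_adj s (B i) (B i) j l) = (if j = l then 1 else 0)" and
    IAB: "\<forall>j<s. \<forall>l<s. (\<Sum>i=1..3. mul_adj s (A i) (B i) j l) = 0" and
    fr: "\<forall>i\<in>{1..3}. frob_sq s (A i) / real s = \<alpha> i \<and> frob_sq s (B i) / real s = \<beta> i"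
    unfolding Brac_def by auto
  have asum: "\<alpha> 1 + \<alpha> 2 + \<alpha> 3 = 1" and anon: "\<forall>i\<in>{1..3}. \<alpha> i \<ge> 0"
    and aout: "\<forall>i. i \<notin> {1..3} \<longrightarrow> \<alpha> i = 0"
    using sa unfolding simplex_def sum3 by auto
  have bsum: "\<beta> 1 + \<beta> 2 + \<beta> 3 = 1" and bnon: "\<forall>i\<in>{1..3}. \<beta> i \<ge> 0"
    and bout: "\<forall>i. i \<notin> {1..3} \<longrightarrow> \<beta> i = 0"
    using sb unfolding simplex_def sum3 by auto
  have av: "\<alpha> = vec3 (\<alpha> 1) (1 - \<alpha> 1) 0"
  proof
    fix i
    show "\<alpha> i = vec3 (\<alpha> 1) (1 - \<alpha> 1) 0 i"
    proof (cases "i \<in> {1..3}")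
      case True
      then have "i = 1 \<or> i = 2 \<or> i = 3" by auto
      then show ?thesis using asum a3 by (auto simp: vec3_def)
    next
      case False then show ?thesis using aout by (auto simp: vec3_def)
    qed
  qed
  have bv: "\<beta> = vec3 (\<beta> 1) 0 (1 - \<beta> 1)"
  proof
    fix i
    show "\<beta> i = vec3 (\<beta> 1) 0 (1 - \<beta> 1) i"
    proof (cases "i \<in> {1..3}")
      case True
      then have "i = 1 \<or> i = 2 \<or> i = 3" by auto
      then show ?thesis using bsum b2 by (auto simp: vec3_def)
    next
      case False then show ?thesis using bout by (auto simp: vec3_def)
    qed
  qed
  have "\<alpha> 1 \<ge> 0" "\<alpha> 2 \<ge> 0" "\<beta> 1 \<ge> 0" "\<beta> 3 \<ge> 0" using anon bnon by auto
  then have a1r: "\<alpha> 1 \<in> {0..1}" and b1r: "\<beta> 1 \<in> {0..1}" using a3 asum b2 bsum by auto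
  have "frob_sq s (A 3) / real s = 0" using fr a3 by auto
  then have fA3: "frob_sq s (A 3) = 0" using sp by simp
  have "frob_sq s (B 2) / real s = 0" using fr b2 by auto
  then have fB2: "frob_sq s (B 2) = 0" using sp by simp
  have A30: "A 3 j k = 0" if "j < s" "k < s" for j k
  proof -
    have "\<forall>j\<in>{..<s}. (\<Sum>k<s. (cmod (A 3 j k))\<^sup>2) = 0"
      using fA3 unfolding frob_sq_def by (subst (asm) sum_nonneg_eq_0_iff) (auto intro: sum_nonneg)
    then have "\<forall>k\<in>{..<s}. (cmod (A 3 j k))\<^sup>2 = 0" using that
      by (subst (asm) sum_nonneg_eq_0_iff) auto
    then show ?thesis using that by auto
  qed
  have B20: "B 2 j k = 0" if "j < s" "k < s" for j k
  proof -
    have "\<forall>j\<in>{..<s}. (\<Sum>k<s. (cmod (B 2 j k))\<^sup>2) = 0"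
      using fB2 unfolding frob_sq_def by (subst (asm) sum_nonneg_eq_0_iff) (auto intro: sum_nonneg)
    then have "\<forall>k\<in>{..<s}. (cmod (B 2 j k))\<^sup>2 = 0" using that
      by (subst (asm) sum_nonneg_eq_0_iff) auto
    then show ?thesis using that by auto
  qed
  have orth: "\<forall>j<s. \<forall>l<s. mul_adj s (A 1) (B 1) j l = 0"
  proof (intro allI impI)
    fix j l assume j: "j < s" and l: "l < s"
    have "mul_adj s (A 2) (B 2) j l = 0" unfolding mul_adj_def using B20 l by simp
    moreover have "mul_adj s (A 3) (B 3) j l = 0" unfolding mul_adj_def using A30 j by simp
    moreover have "mul_adj s (A 1) (B 1) j l + mul_adj s (A 2) (B 2) j l + mul_adj s (A 3) (B 3) j l = 0"
      using IAB j l unfolding sum3 by blast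
    ultimately show "mul_adj s (A 1) (B 1) j l = 0" by simp
  qed
  obtain p q where pA: "frob_sq s (A 1) \<le> real p" and qB: "frob_sq s (B 1) \<le> real q" and pq: "p + q \<le> s"
    using necessity_core[OF IA IB _ _ orth] by auto
  have "frob_sq s (A 1) / real s = \<alpha> 1" using fr by auto
  then have "frob_sq s (A 1) = \<alpha> 1 * real s" using sp by (auto simp: field_simps)
  then have "\<lceil>\<alpha> 1 * real s\<rceil> \<le> int p" using pA by (simp add: ceiling_le_iff)
  moreover have "frob_sq s (B 1) / real s = \<beta> 1" using fr by auto
  then have "frob_sq s (B 1) = \<beta> 1 * real s" using sp by (auto simp: field_simps)
  then have "\<lceil>\<beta> 1 * real s\<rceil> \<le> int q" using qB by (simp add: ceiling_le_iff)
  ultimately have "\<lceil>\<alpha> 1 * real s\<rceil> + \<lceil>\<beta> 1 * real s\<rceil> \<le> int s" using pq by linarith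
  then show "z \<in> {(vec3 a1 (1 - a1) 0, vec3 b1 0 (1 - b1)) | a1 b1.
            a1 \<in> {0..1} \<and> b1 \<in> {0..1} \<and> \<lceil>a1 * real s\<rceil> + \<lceil>b1 * real s\<rceil> \<le> int s}"
    using a1r b1r zab av bv by blast
next
  fix z assume "z \<in> {(vec3 a1 (1 - a1) 0, vec3 b1 0 (1 - b1)) | a1 b1.
            a1 \<in> {0..1} \<and> b1 \<in> {0..1} \<and> \<lceil>a1 * real s\<rceil> + \<lceil>b1 * real s\<rceil> \<le> int s}"
  then obtain a1 b1 where z: "z = (vec3 a1 (1 - a1) 0, vec3 b1 0 (1 - b1))" and a: "a1 \<in> {0..1}" and b: "b1 \<in> {0..1}"
    and c: "\<lceil>a1 * real s\<rceil> + \<lceil>b1 * real s\<rceil> \<le> int s" by blast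
  have "z \<in> Brac 3 s" unfolding z using construction[OF assms _ _ _ _ c] a b by auto
  moreover have "vec3 a1 (1 - a1) 0 \<in> simplex 3" using a by (intro vec3_simplex) auto
  moreover have "vec3 b1 0 (1 - b1) \<in> simplex 3" using b by (intro vec3_simplex) auto
  ultimately show "z \<in> Brac 3 s \<inter> {(\<alpha>, \<beta>). \<alpha> \<in> simplex 3 \<and> \<beta> \<in> simplex 3 \<and> \<alpha> 3 = 0 \<and> \<beta> 2 = 0}"
    unfolding z by (auto simp: vec3_def)
qed

end
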